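(* Let $X \subseteq {}^\omega 2$ and let $D \subseteq \mathbb{S}$ satisfy: (a) $D$ is dense: for every $p\in\mathbb S$ there is $q\le p$ with $q\in D$; (b) $D$ is translation-invariant: for every $p\in\mathbb S$ and $t\in{}^\omega 2$, $p\in D$ iff $p+t\in D$; (c) for every cardinal $\mu<\mathfrak c$ and every family $\{p_\alpha:\alpha<\mu\}\subseteq D$ we have $X\not\subseteq\bigcup_{\alpha<\mu}[p_\alpha]$. Then there is $Y\in s_0$ with $X+Y={}^\omega 2$; i.e., $X$ is not $s_0$-shiftable.
   Context: ${}^\omega 2$ is the Cantor space with bitwise addition modulo $2$, denoted $+$; $\mathfrak c=2^{\aleph_0}$. $\mathbb S$ (Sacks forcing) is the set of perfect subtrees of ${}^{<\omega}2$, ordered by inclusion ($q\le p$ iff $q\subseteq p$); $[p]$ denotes the set of branches of $p$. For $p\in\mathbb S$ and $t\in{}^\omega 2$, $p+t=\{\sigma+t\restriction|\sigma| : \sigma\in p\}$, so $[p+t]=[p]+t$. A set $Y \subseteq {}^\omega 2$ is Marczewski null ($Y \in s_0$) if for every $p\in\mathbb S$ there is $q\le p$ with $[q]\cap Y=\emptyset$. A set $X$ is $s_0$-shiftable if $X+Y\neq{}^\omega 2$ for every $Y\in s_0$. *)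

theory Defs
  imports Main
begin

text \<open>Cantor space: elements are functions nat \<Rightarrow> bool; addition mod 2 is pointwise xor.
  Finite binary sequences (elements of 2^{<omega}) are bool lists; list index i is bit i.\<close>

type_synonym cantor = "nat \<Rightarrow> bool"

definition cadd :: "cantor \<Rightarrow> cantor \<Rightarrow> cantor" where
  "cadd x y = (\<lambda>n. x n \<noteq> y n)"

definition set_sum :: "cantor set \<Rightarrow> cantor set \<Rightarrow> cantor set" where
  "set_sum X Y = {cadd x y | x y. x \<in> X \<and> y \<in> Y}"

definition restr :: "cantor \<Rightarrow> nat \<Rightarrow> bool list" where
  "restr x n = map x [0..<n]"

definition is_tree :: "bool list set \<Rightarrow> bool" where
  "is_tree p \<longleftrightarrow> p \<noteq> {} \<and> (\<forall>\<sigma>\<in>p. \<forall>n. take n \<sigma> \<in> p)"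

definition perfect_tree :: "bool list set \<Rightarrow> bool" where
  "perfect_tree p \<longleftrightarrow> is_tree p \<and>
     (\<forall>\<sigma>\<in>p. \<exists>\<tau>. (\<exists>\<rho>. \<tau> = \<sigma> @ \<rho>) \<and> \<tau> @ [False] \<in> p \<and> \<tau> @ [True] \<in> p)"

definition Sacks :: "bool list set set" where
  "Sacks = {p. perfect_tree p}"

definition branches :: "bool list set \<Rightarrow> cantor set" where
  "branches p = {x. \<forall>n. restr x n \<in> p}"

definition tree_shift :: "bool list set \<Rightarrow> cantor \<Rightarrow> bool list set" where
  "tree_shift p t = {map2 (\<noteq>) \<sigma> (restr t (length \<sigma>)) | \<sigma>. \<sigma> \<in> p}"

definition marczewski_null :: "cantor set \<Rightarrow> bool" where
  "marczewski_null Y \<longleftrightarrow> (\<forall>p\<in>Sacks. \<exists>q\<in>Sacks. q \<subseteq> p \<and> branches q \<inter> Y = {})"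

definition s0_shiftable :: "cantor set \<Rightarrow> bool" where
  "s0_shiftable X \<longleftrightarrow> (\<forall>Y. marczewski_null Y \<longrightarrow> set_sum X Y \<noteq> UNIV)"

end

theory Submission
  imports Defs "HOL-Library.Sublist" "HOL-Library.Countable"
begin


lemma restr_len[simp]: "length (restr x n) = n" by (simp add: restr_def)

lemma shift_restr_iff:
  assumes "length \<sigma> = n"
  shows "map2 (\<noteq>) \<sigma> (restr t n) = restr x n \<longleftrightarrow> \<sigma> = restr (cadd x t) n"
  using assms by (auto simp: list_eq_iff_nth_eq restr_def cadd_def)

lemma branches_shift: "x \<in> branches (tree_shift q t) \<longleftrightarrow> cadd x t \<in> branches q"
proof
  assume a: "x \<in> branches (tree_shift q t)"
  show "cadd x t \<in> branches q" unfolding branches_def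
  proof (intro CollectI allI)
    fix n
    from a obtain \<sigma> where s: "\<sigma> \<in> q" "restr x n = map2 (\<noteq>) \<sigma> (restr t (length \<sigma>))"
      unfolding branches_def tree_shift_def by blast
    then have "length \<sigma> = n" by (metis length_map length_zip min.idem restr_len)
    moreover have "map2 (\<noteq>) \<sigma> (restr t n) = restr x n" using s calculation by simp
    ultimately have "\<sigma> = restr (cadd x t) n" using shift_restr_iff[of \<sigma> n t x] by blast
    then show "restr (cadd x t) n \<in> q" using s(1) by simp
  qed
next
  assume a: "cadd x t \<in> branches q"
  show "x \<in> branches (tree_shift q t)" unfolding branches_def tree_shift_def
  proof (intro allI CollectI exI conjI)
    fix n
    show "restr (cadd x t) n \<in> q" using a by (simp add: branches_def)
    show "restr x n = map2 (\<noteq>) (restr (cadd x t) n) (restr t (length (restr (cadd x t) n)))"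
      using shift_restr_iff[of "restr (cadd x t) n" n t x] by simp
  qed
qed

lemma branches_mono: "q \<subseteq> p \<Longrightarrow> branches q \<subseteq> branches p"
  by (auto simp: branches_def)

lemma cadd_comm: "cadd x y = cadd y x" by (auto simp: cadd_def)
lemma cadd_cancel: "cadd a (cadd z a) = z" by (auto simp: cadd_def)




definition spl :: "bool list set \<Rightarrow> bool list \<Rightarrow> bool list" where
  "spl q \<tau> = (SOME \<tau>'. prefix \<tau> \<tau>' \<and> \<tau>' @ [False] \<in> q \<and> \<tau>' @ [True] \<in> q)"

definition E :: "bool list set \<Rightarrow> bool list \<Rightarrow> bool list" where
  "E q \<sigma> = fold (\<lambda>b \<tau>. spl q (\<tau> @ [b])) \<sigma> (spl q [])"

definition adm :: "cantor \<Rightarrow> bool list \<Rightarrow> bool" where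
  "adm z \<sigma> \<longleftrightarrow> (\<forall>n. 2*n < length \<sigma> \<longrightarrow> \<sigma>!(2*n) = z n)"

definition T :: "bool list set \<Rightarrow> cantor \<Rightarrow> bool list set" where
  "T q z = {\<tau>. \<exists>\<sigma>. adm z \<sigma> \<and> prefix \<tau> (E q \<sigma>)}"

lemma tree_prefix: "is_tree q \<Longrightarrow> \<tau> \<in> q \<Longrightarrow> prefix \<rho> \<tau> \<Longrightarrow> \<rho> \<in> q"
  unfolding is_tree_def prefix_def by (metis append_eq_conv_conj)

lemma spl_prop:
  assumes "perfect_tree q" "\<tau> \<in> q"
  shows "prefix \<tau> (spl q \<tau>) \<and> spl q \<tau> @ [False] \<in> q \<and> spl q \<tau> @ [True] \<in> q"
proof -
  from assms obtain \<tau>' where "(\<exists>\<rho>. \<tau>' = \<tau> @ \<rho>) \<and> \<tau>' @ [False] \<in> q \<and> \<tau>' @ [True] \<in> q"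
    unfolding perfect_tree_def by blast
  then have "prefix \<tau> \<tau>' \<and> \<tau>' @ [False] \<in> q \<and> \<tau>' @ [True] \<in> q" by (auto simp: prefix_def)
  then show ?thesis unfolding spl_def by (rule someI)
qed

lemma spl_snoc: "perfect_tree q \<Longrightarrow> \<tau> \<in> q \<Longrightarrow> spl q \<tau> @ [b] \<in> q"
  using spl_prop[of q \<tau>] by (cases b) auto

lemma E_snoc[simp]: "E q (\<sigma> @ [b]) = spl q (E q \<sigma> @ [b])"
  by (simp add: E_def)

lemma E_Nil[simp]: "E q [] = spl q []" by (simp add: E_def)

lemma nil_in: "is_tree q \<Longrightarrow> [] \<in> q"
  unfolding is_tree_def by (metis all_not_in_conv take_0)

lemma E_in: assumes "perfect_tree q" shows "E q \<sigma> @ [b] \<in> q"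
proof (induction \<sigma> arbitrary: b rule: rev_induct)
  case Nil
  have "[] \<in> q" using assms nil_in perfect_tree_def by blast
  then show ?case using spl_snoc[OF assms] by simp
next
  case (snoc c \<sigma>)
  then show ?case using spl_snoc[OF assms] by simp
qed

lemma E_in': assumes "perfect_tree q" shows "E q \<sigma> \<in> q"
  using E_in[OF assms, of \<sigma> True] assms tree_prefix perfect_tree_def
  by (metis prefixI)

lemma E_snoc_prefix: assumes "perfect_tree q" shows "prefix (E q \<sigma> @ [b]) (E q (\<sigma> @ [b]))"
  using spl_prop[OF assms E_in[OF assms]] by simp

lemma E_mono: assumes "perfect_tree q" shows "prefix (E q \<sigma>) (E q (\<sigma> @ \<rho>))"
proof (induction \<rho> rule: rev_induct)
  case Nil then show ?case by simp
next
  case (snoc b \<rho>)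
  have "prefix (E q (\<sigma> @ \<rho>)) (E q ((\<sigma> @ \<rho>) @ [b]))"
    using E_snoc_prefix[OF assms, of "\<sigma>@\<rho>" b] by (metis prefix_order.dual_order.trans prefixI)
  then show ?case using snoc by (metis append_assoc prefix_order.dual_order.trans)
qed

lemma E_mono': "perfect_tree q \<Longrightarrow> prefix \<sigma> \<sigma>' \<Longrightarrow> prefix (E q \<sigma>) (E q \<sigma>')"
  using E_mono by (metis prefix_def)

lemma E_incomp:
  assumes pq: "perfect_tree q" and "length \<sigma> = length \<sigma>'" "\<sigma> \<noteq> \<sigma>'"
    and "prefix (E q \<sigma>) x" "prefix (E q \<sigma>') x"
  shows False
proof -
  obtain ps xs ys where d: "\<sigma> = ps @ xs" "\<sigma>' = ps @ ys" "xs = [] \<or> ys = [] \<or> hd xs \<noteq> hd ys"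
    using longest_common_prefix by blast
  then have "length xs = length ys" using assms by simp
  with d assms have "xs \<noteq> []" "ys \<noteq> []" by auto
  then obtain a r1 a' r2 where xs: "xs = a # r1" "ys = a' # r2" by (meson list.exhaust)
  with d \<open>xs \<noteq> []\<close> \<open>ys \<noteq> []\<close> have "a \<noteq> a'" by auto
  have "prefix (E q ps @ [a]) (E q \<sigma>)"
    using E_snoc_prefix[OF pq, of ps a] E_mono[OF pq, of "ps@[a]" r1] d xs
    by (metis append.assoc append_Cons append_Nil prefix_order.dual_order.trans)
  moreover have "prefix (E q ps @ [a']) (E q \<sigma>')"
    using E_snoc_prefix[OF pq, of ps a'] E_mono[OF pq, of "ps@[a']" r2] d xs
    by (metis append.assoc append_Cons append_Nil prefix_order.dual_order.trans)
  ultimately have "prefix (E q ps @ [a]) x" "prefix (E q ps @ [a']) x"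
    using assms by (meson prefix_order.dual_order.trans)+
  then have "prefix (E q ps @ [a]) (E q ps @ [a']) \<or> prefix (E q ps @ [a']) (E q ps @ [a])"
    using prefix_same_cases by blast
  then show False using \<open>a \<noteq> a'\<close> by auto
qed



unbundle cardinal_syntax
unbundle cardinal_syntax

lemma T_sub: assumes "perfect_tree q" shows "T q z \<subseteq> q"
proof
  fix \<tau> assume "\<tau> \<in> T q z"
  then obtain \<sigma> where "prefix \<tau> (E q \<sigma>)" unfolding T_def by blast
  moreover have "is_tree q" using assms perfect_tree_def by blast
  ultimately show "\<tau> \<in> q" using tree_prefix E_in'[OF assms] by blast
qed

lemma adm_take: "adm z \<sigma> \<Longrightarrow> adm z (take k \<sigma>)"
  unfolding adm_def by auto

lemma T_perfect: assumes pq: "perfect_tree q" shows "perfect_tree (T q z)"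
  unfolding perfect_tree_def is_tree_def
proof (intro conjI ballI allI)
  have "adm z []" by (simp add: adm_def)
  then show "T q z \<noteq> {}" unfolding T_def by blast
next
  fix \<sigma> n assume "\<sigma> \<in> T q z"
  then obtain \<sigma>0 where "adm z \<sigma>0" "prefix \<sigma> (E q \<sigma>0)" unfolding T_def by blast
  moreover have "prefix (take n \<sigma>) \<sigma>" by (rule take_is_prefix)
  ultimately show "take n \<sigma> \<in> T q z" unfolding T_def
    using prefix_order.dual_order.trans by blast
next
  fix \<tau> assume "\<tau> \<in> T q z"
  then obtain \<sigma> where s: "adm z \<sigma>" "prefix \<tau> (E q \<sigma>)" unfolding T_def by blast
  define \<sigma>' where "\<sigma>' = (if even (length \<sigma>) then \<sigma> @ [z (length \<sigma> div 2)] else \<sigma>)"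
  have odd: "odd (length \<sigma>')" by (simp add: \<sigma>'_def)
  have a': "adm z \<sigma>'" using s(1) unfolding \<sigma>'_def adm_def
    by (auto simp: nth_append less_Suc_eq)
  have p': "prefix \<sigma> \<sigma>'" by (simp add: \<sigma>'_def)
  have "prefix \<tau> (E q \<sigma>')" using E_mono'[OF pq p'] s(2) by (meson prefix_order.dual_order.trans)
  moreover have "E q \<sigma>' @ [b] \<in> T q z" for b
  proof -
    have "adm z (\<sigma>' @ [b])" using a' odd unfolding adm_def
      by (auto simp: nth_append less_Suc_eq, (metis dvd_triv_left)+)
    then show ?thesis unfolding T_def using E_snoc_prefix[OF pq] by blast
  qed
  ultimately show "\<exists>\<tau>'. (\<exists>\<rho>. \<tau>' = \<tau> @ \<rho>) \<and> \<tau>' @ [False] \<in> T q z \<and> \<tau>' @ [True] \<in> T q z"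
    by (auto simp: prefix_def)
qed

lemma restr_prefix: "m \<le> M \<Longrightarrow> prefix (restr x m) (restr x M)"
  unfolding restr_def by (metis le_add_diff_inverse map_append prefixI upt_add_eq_append zero_le)

lemma branch_extract:
  assumes pq: "perfect_tree q" and x: "x \<in> branches (T q z)"
  shows "\<exists>\<sigma> M. adm z \<sigma> \<and> length \<sigma> = k \<and> prefix (E q \<sigma>) (restr x M)"
proof -
  define L where "L = {\<sigma>::bool list. set \<sigma> \<subseteq> UNIV \<and> length \<sigma> \<le> k}"
  have fin: "finite L" unfolding L_def by (rule finite_lists_length_le) simp
  define M where "M = Suc (Max (length ` E q ` L))"
  have bound: "length (E q \<sigma>) < M" if "length \<sigma> \<le> k" for \<sigma>
  proof -
    have "\<sigma> \<in> L" using that by (simp add: L_def)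
    then have "length (E q \<sigma>) \<le> Max (length ` E q ` L)" using fin by simp
    then show ?thesis by (simp add: M_def)
  qed
  from x have "restr x M \<in> T q z" by (simp add: branches_def)
  then obtain \<sigma>' where s: "adm z \<sigma>'" "prefix (restr x M) (E q \<sigma>')" unfolding T_def by blast
  have "length (E q \<sigma>') \<ge> M" using prefix_length_le[OF s(2)] by simp
  then have "\<not> length \<sigma>' \<le> k" using bound[of \<sigma>'] by linarith
  define \<sigma> where "\<sigma> = take k \<sigma>'"
  have l: "length \<sigma> = k" using \<open>\<not> length \<sigma>' \<le> k\<close> by (simp add: \<sigma>_def)
  have a: "adm z \<sigma>" by (simp add: \<sigma>_def adm_take s(1))
  have "prefix (E q \<sigma>) (E q \<sigma>')" using E_mono'[OF pq] take_is_prefix \<sigma>_def by metis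
  then have "prefix (E q \<sigma>) (restr x M) \<or> prefix (restr x M) (E q \<sigma>)"
    using s(2) prefix_same_cases by blast
  moreover have "length (E q \<sigma>) < M" using bound l by simp
  ultimately have "prefix (E q \<sigma>) (restr x M)" using prefix_length_le[of "restr x M" "E q \<sigma>"] by auto
  then show ?thesis using a l by blast
qed

lemma T_disjoint:
  assumes pq: "perfect_tree q" and "z \<noteq> w"
  shows "branches (T q z) \<inter> branches (T q w) = {}"
proof (rule ccontr)
  assume "branches (T q z) \<inter> branches (T q w) \<noteq> {}"
  then obtain x where x: "x \<in> branches (T q z)" "x \<in> branches (T q w)" by blast
  from assms obtain n where n: "z n \<noteq> w n" by blast
  obtain \<sigma>1 M1 where 1: "adm z \<sigma>1" "length \<sigma>1 = Suc (2*n)" "prefix (E q \<sigma>1) (restr x M1)"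
    using branch_extract[OF pq x(1)] by blast
  obtain \<sigma>2 M2 where 2: "adm w \<sigma>2" "length \<sigma>2 = Suc (2*n)" "prefix (E q \<sigma>2) (restr x M2)"
    using branch_extract[OF pq x(2)] by blast
  have "\<sigma>1!(2*n) = z n" using 1 by (simp add: adm_def)
  moreover have "\<sigma>2!(2*n) = w n" using 2 by (simp add: adm_def)
  ultimately have ne: "\<sigma>1 \<noteq> \<sigma>2" using n by auto
  have pp: "prefix (E q \<sigma>1) (restr x (max M1 M2))" "prefix (E q \<sigma>2) (restr x (max M1 M2))"
    using 1(3) 2(3) restr_prefix by (meson max.cobounded1 max.cobounded2 prefix_order.dual_order.trans)+
  show False using E_incomp[OF pq _ ne pp] 1(2) 2(2) by simp
qed

lemma perfect_avoid:
  assumes q: "q \<in> Sacks" and S: "|S| <o |UNIV :: cantor set|"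
  shows "\<exists>q'\<in>Sacks. q' \<subseteq> q \<and> branches q' \<inter> S = {}"
proof (rule ccontr)
  assume nt: "\<not> ?thesis"
  have pq: "perfect_tree q" using q by (simp add: Sacks_def)
  have ne: "branches (T q z) \<inter> S \<noteq> {}" for z
  proof -
    have "T q z \<in> Sacks" by (simp add: Sacks_def T_perfect[OF pq])
    then show ?thesis using nt T_sub[OF pq, of z] by blast
  qed
  define s where "s z = (SOME x. x \<in> branches (T q z) \<inter> S)" for z
  have s: "s z \<in> branches (T q z) \<inter> S" for z
  proof -
    have "\<exists>x. x \<in> branches (T q z) \<inter> S" using ne[of z] by blast
    then show ?thesis unfolding s_def by (rule someI_ex)
  qed
  have "inj s"
  proof (rule injI)
    fix z w assume e: "s z = s w"
    have 1: "s z \<in> branches (T q z)" using s[of z] by (rule IntD1)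
    have 2: "s z \<in> branches (T q w)" using s[of w] e by simp
    show "z = w"
    proof (rule ccontr)
      assume "z \<noteq> w"
      then have "branches (T q z) \<inter> branches (T q w) = {}" by (rule T_disjoint[OF pq])
      then show False using 1 2 by (simp add: disjoint_iff)
    qed
  qed
  then have "|UNIV :: cantor set| \<le>o |S|" using s card_of_ordLeqI[of s UNIV S] by simp
  then show False using S not_ordLess_ordLeq by auto
qed




lemma Sacks_card: "|D| \<le>o |UNIV :: cantor set|" if "D \<subseteq> Sacks" for D :: "bool list set set"
proof -
  define h where "h P = (\<lambda>n. \<exists>\<sigma>\<in>P. to_nat \<sigma> = n)" for P :: "bool list set"
  have "inj h"
  proof (rule injI)
    fix P P' assume e: "h P = h P'"
    have "\<sigma> \<in> P \<longleftrightarrow> \<sigma> \<in> P'" for \<sigma>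
    proof -
      have "h P (to_nat \<sigma>) = h P' (to_nat \<sigma>)" using e by simp
      then show ?thesis unfolding h_def by auto
    qed
    then show "P = P'" by blast
  qed
  then show ?thesis using card_of_ordLeqI[of h D UNIV] by (simp add: inj_on_def)
qed

lemma UNIV_Sacks: "UNIV \<in> Sacks"
  unfolding Sacks_def perfect_tree_def is_tree_def by blast

lemma infinite_cantor: "infinite (UNIV :: cantor set)"
proof
  assume "finite (UNIV :: cantor set)"
  moreover have "inj (\<lambda>n::nat. \<lambda>m. m = n)" by (rule injI) metis
  ultimately have "finite (UNIV :: nat set)" using finite_imageD by (metis finite_subset subset_UNIV)
  then show False by simp
qed

lemma singl_less: "|{a :: cantor}| <o |UNIV :: cantor set|"
proof -
  have "\<not> (\<exists>f. inj_on f (UNIV :: cantor set) \<and> f ` UNIV \<subseteq> {a})"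
  proof
    assume "\<exists>f. inj_on f (UNIV :: cantor set) \<and> f ` UNIV \<subseteq> {a}"
    then obtain f where f: "inj_on f (UNIV :: cantor set)" "f ` UNIV \<subseteq> {a}" by blast
    have "f (\<lambda>_. True) = f (\<lambda>_. False)" using f(2) by (metis rangeI singletonD subsetD)
    then have "(\<lambda>_::nat. True) = (\<lambda>_. False)" using f(1) by (simp add: inj_on_def)
    then show False by (metis (full_types))
  qed
  then show ?thesis using card_of_ordLess by blast
qed




theorem lemma2p1:
  fixes X :: "cantor set" and D :: "bool list set set"
  assumes D_sub: "D \<subseteq> Sacks"
    and dense: "\<forall>p\<in>Sacks. \<exists>q\<in>D. q \<subseteq> p"
    and invariant: "\<forall>p\<in>Sacks. \<forall>t. p \<in> D \<longleftrightarrow> tree_shift p t \<in> D"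
    and small: "\<forall>F. F \<subseteq> D \<and> (card_of F, card_of (UNIV :: cantor set)) \<in> ordLess \<longrightarrow>
                     \<not> X \<subseteq> (\<Union>p\<in>F. branches p)"
  shows "\<exists>Y. marczewski_null Y \<and> set_sum X Y = UNIV \<and> \<not> s0_shiftable X"
proof -
  define r where "r = |UNIV :: cantor set|"
  have Cr: "Card_order r" unfolding r_def by (rule card_of_Card_order)
  have Fr: "Field r = UNIV" unfolding r_def by (rule Field_card_of)
  have tot: "total_on UNIV r" using card_of_Well_order[of "UNIV :: cantor set"]
    unfolding r_def well_order_on_def linear_order_on_def partial_order_on_def by (simp add: Field_card_of)
  have "D \<noteq> {}" using dense UNIV_Sacks by blast
  then obtain f where f: "f ` (UNIV :: cantor set) = D"
    using card_of_ordLeq2[of D "UNIV :: cantor set"] Sacks_card[OF D_sub] by blast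
  define F where "F \<alpha> = (\<lambda>\<beta>. tree_shift (f \<beta>) \<alpha>) ` underS r \<alpha>" for \<alpha>
  have FD: "F \<alpha> \<subseteq> D" for \<alpha>
  proof
    fix p assume "p \<in> F \<alpha>"
    then obtain \<beta> where p: "p = tree_shift (f \<beta>) \<alpha>" unfolding F_def by blast
    have "f \<beta> \<in> D" using f by blast
    then show "p \<in> D" using p invariant D_sub by blast
  qed
  have Fs: "(card_of (F \<alpha>), card_of (UNIV :: cantor set)) \<in> ordLess" for \<alpha>
  proof -
    have "|F \<alpha>| \<le>o |underS r \<alpha>|" unfolding F_def by (rule card_of_image)
    moreover have "|underS r \<alpha>| <o r" using card_of_underS[OF Cr] Fr by simp
    ultimately show ?thesis unfolding r_def by (rule ordLeq_ordLess_trans)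
  qed
  have ex: "\<exists>x. x \<in> X \<and> x \<notin> (\<Union>p\<in>F \<alpha>. branches p)" for \<alpha>
    using small FD[of \<alpha>] Fs[of \<alpha>] by blast
  define x where "x \<alpha> = (SOME x. x \<in> X \<and> x \<notin> (\<Union>p\<in>F \<alpha>. branches p))" for \<alpha>
  have x: "x \<alpha> \<in> X \<and> x \<alpha> \<notin> (\<Union>p\<in>F \<alpha>. branches p)" for \<alpha>
    unfolding x_def by (rule someI_ex[OF ex])
  define y where "y \<alpha> = cadd \<alpha> (x \<alpha>)" for \<alpha>
  define Y where "Y = range y"
  have sum: "set_sum X Y = UNIV"
  proof -
    have "z \<in> set_sum X Y" for z
    proof -
      have "z = cadd (x z) (y z)" unfolding y_def by (simp add: cadd_cancel)
      then show ?thesis unfolding set_sum_def Y_def using x[of z] by blast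
    qed
    then show ?thesis by blast
  qed
  have key: "y \<alpha> \<notin> branches (f \<beta>)" if "\<beta> \<in> underS r \<alpha>" for \<alpha> \<beta>
  proof
    assume "y \<alpha> \<in> branches (f \<beta>)"
    then have "cadd (x \<alpha>) \<alpha> \<in> branches (f \<beta>)" unfolding y_def by (simp add: cadd_comm)
    then have "x \<alpha> \<in> branches (tree_shift (f \<beta>) \<alpha>)" by (simp add: branches_shift)
    moreover have "tree_shift (f \<beta>) \<alpha> \<in> F \<alpha>" unfolding F_def using that by blast
    ultimately show False using x[of \<alpha>] by blast
  qed
  have mn: "marczewski_null Y"
    unfolding marczewski_null_def
  proof
    fix p assume p: "p \<in> Sacks"
    then obtain q where q: "q \<in> D" "q \<subseteq> p" using dense by blast
    then obtain \<beta> where qb: "q = f \<beta>" using f by blast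
    define S where "S = y ` underS r \<beta> \<union> {y \<beta>}"
    have "|S| <o |UNIV :: cantor set|"
    proof -
      have "|y ` underS r \<beta>| \<le>o |underS r \<beta>|" by (rule card_of_image)
      moreover have "|underS r \<beta>| <o r" using card_of_underS[OF Cr] Fr by simp
      ultimately have "|y ` underS r \<beta>| <o |UNIV :: cantor set|" unfolding r_def
        by (rule ordLeq_ordLess_trans)
      then show ?thesis unfolding S_def
        using card_of_Un_ordLess_infinite[OF infinite_cantor _ singl_less] by blast
    qed
    then obtain q' where q': "q' \<in> Sacks" "q' \<subseteq> q" "branches q' \<inter> S = {}"
      using perfect_avoid q D_sub by blast
    have "branches q \<inter> Y \<subseteq> S"
    proof
      fix v assume v: "v \<in> branches q \<inter> Y"
      then obtain \<alpha> where a: "v = y \<alpha>" unfolding Y_def by blast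
      show "v \<in> S"
      proof (rule ccontr)
        assume "v \<notin> S"
        then have "\<alpha> \<noteq> \<beta>" "\<alpha> \<notin> underS r \<beta>" unfolding S_def a by auto
        then have "(\<alpha>, \<beta>) \<notin> r" by (simp add: underS_def)
        then have "(\<beta>, \<alpha>) \<in> r" using tot \<open>\<alpha> \<noteq> \<beta>\<close> unfolding total_on_def by blast
        then have "\<beta> \<in> underS r \<alpha>" using \<open>\<alpha> \<noteq> \<beta>\<close> by (simp add: underS_def)
        then show False using key v a qb by blast
      qed
    qed
    then have "branches q' \<inter> Y = {}" using q' branches_mono[OF q'(2)] by blast
    then show "\<exists>q'\<in>Sacks. q' \<subseteq> p \<and> branches q' \<inter> Y = {}" using q' q by blast
  qed
  have "\<not> s0_shiftable X" unfolding s0_shiftable_def using mn sum by blast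
  then show ?thesis using mn sum by blast
qed


end
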